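(* Let $(\Delta,\mathcal H)$ be a generic cut with associated simplicial complexes $K_\Delta,K_+$ on $\widetilde{[m]}=[m]\cup\{o\}$. For $\sigma\subset\widetilde{[m]}$ let $F_\sigma=\bigcap_{i\in\sigma}H_i$, and let $Z=\{\sigma\subset\widetilde{[m]}: F_\sigma\neq\varnothing\text{ and }F_\sigma\subset\Delta_+\setminus H_o\}$. Then $$K_+\setminus\overline Z=O_{K_+}(o),\qquad K_\Delta\setminus\overline Z=\{\sigma\subset\widetilde{[m]}:F_\sigma\ne\varnothing\text{ and }F_\sigma\subset\Delta_-\setminus H_o\}.$$
   Context: Let $\Delta\subset\mathbb R^n$ be an $n$-dimensional simple polytope $\Delta=\{x:\langle x,\lambda_i\rangle+\eta_i\ge0,\ i=1,\dots,m\}$ whose facets $H_i=\Delta\cap\{\langle x,\lambda_i\rangle+\eta_i=0\}$ are all nonempty. A generic cut is a hyperplane $\mathcal H=\{\langle x,\lambda_0\rangle+\xi=0\}$ in general position with the hyperplanes $\{\langle x,\lambda_i\rangle+\eta_i=0\}$ and with $H_o:=\mathcal H\cap\Delta\neq\varnothing$ (so $H_o$ is the facet indexed by $o$). Set $\Delta_\pm=\Delta\cap\{\pm(\langle x,\lambda_0\rangle+\xi)\ge0\}$, $K_\Delta=\{\sigma\subset[m]:\bigcap_{i\in\sigma}H_i\ne\varnothing\}\cup\{\varnothing\}$, $K_+=\{\sigma\subset\widetilde{[m]}:\bigcap_{i\in\sigma}(H_i\cap\Delta_+)\ne\varnothing\}\cup\{\varnothing\}$. $\overline Z$ is the smallest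 simplicial complex containing $Z$, and $O_{K_+}(o)=\{\sigma\in K_+: o\in\sigma\}$. *)

theory Defs
  imports "HOL-Analysis.Analysis"
begin

text \<open>Facet indices are [m] = {1..m}; the new index o is encoded as 0, so that
the extended index set is {0..m} = [m] \<union> {o}.\<close>

definition hyp :: "'a::euclidean_space \<Rightarrow> real \<Rightarrow> 'a set" where
  "hyp l e = {x. inner x l + e = 0}"

definition polyP :: "(nat \<Rightarrow> 'a::euclidean_space) \<Rightarrow> (nat \<Rightarrow> real) \<Rightarrow> nat \<Rightarrow> 'a set" where
  "polyP lam eta m = {x. \<forall>i\<in>{1..m}. inner x (lam i) + eta i \<ge> 0}"

definition facetH :: "(nat \<Rightarrow> 'a::euclidean_space) \<Rightarrow> (nat \<Rightarrow> real) \<Rightarrow> nat \<Rightarrow> nat \<Rightarrow> 'a set" where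
  "facetH lam eta m i = polyP lam eta m \<inter> hyp (lam i) (eta i)"

definition simple_polytope :: "(nat \<Rightarrow> 'a::euclidean_space) \<Rightarrow> (nat \<Rightarrow> real) \<Rightarrow> nat \<Rightarrow> bool" where
  "simple_polytope lam eta m \<longleftrightarrow>
     polytope (polyP lam eta m) \<and>
     aff_dim (polyP lam eta m) = int DIM('a) \<and>
     (\<forall>i\<in>{1..m}. facetH lam eta m i \<noteq> {}) \<and>
     (\<forall>v. v extreme_point_of (polyP lam eta m) \<longrightarrow>
          card {i\<in>{1..m}. v \<in> facetH lam eta m i} = DIM('a))"

definition general_position_cut ::
  "(nat \<Rightarrow> 'a::euclidean_space) \<Rightarrow> (nat \<Rightarrow> real) \<Rightarrow> nat \<Rightarrow> 'a \<Rightarrow> real \<Rightarrow> bool" where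
  "general_position_cut lam eta m lam0 xi \<longleftrightarrow>
     (\<forall>S \<subseteq> {1..m}.
        (\<Inter>i\<in>S. hyp (lam i) (eta i)) \<inter> hyp lam0 xi \<noteq> {} \<longrightarrow>
        aff_dim ((\<Inter>i\<in>S. hyp (lam i) (eta i)) \<inter> hyp lam0 xi)
          = aff_dim (\<Inter>i\<in>S. hyp (lam i) (eta i)) - 1)"

definition Hcut_o :: "(nat \<Rightarrow> 'a::euclidean_space) \<Rightarrow> (nat \<Rightarrow> real) \<Rightarrow> nat \<Rightarrow> 'a \<Rightarrow> real \<Rightarrow> 'a set" where
  "Hcut_o lam eta m lam0 xi = hyp lam0 xi \<inter> polyP lam eta m"

definition generic_cut :: "(nat \<Rightarrow> 'a::euclidean_space) \<Rightarrow> (nat \<Rightarrow> real) \<Rightarrow> nat \<Rightarrow> 'a \<Rightarrow> real \<Rightarrow> bool" where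
  "generic_cut lam eta m lam0 xi \<longleftrightarrow>
     simple_polytope lam eta m \<and> general_position_cut lam eta m lam0 xi \<and>
     Hcut_o lam eta m lam0 xi \<noteq> {}"

definition Delta_plus :: "(nat \<Rightarrow> 'a::euclidean_space) \<Rightarrow> (nat \<Rightarrow> real) \<Rightarrow> nat \<Rightarrow> 'a \<Rightarrow> real \<Rightarrow> 'a set" where
  "Delta_plus lam eta m lam0 xi = polyP lam eta m \<inter> {x. inner x lam0 + xi \<ge> 0}"

definition Delta_minus :: "(nat \<Rightarrow> 'a::euclidean_space) \<Rightarrow> (nat \<Rightarrow> real) \<Rightarrow> nat \<Rightarrow> 'a \<Rightarrow> real \<Rightarrow> 'a set" where
  "Delta_minus lam eta m lam0 xi = polyP lam eta m \<inter> {x. - (inner x lam0 + xi) \<ge> 0}"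

definition facetX :: "(nat \<Rightarrow> 'a::euclidean_space) \<Rightarrow> (nat \<Rightarrow> real) \<Rightarrow> nat \<Rightarrow> 'a \<Rightarrow> real \<Rightarrow> nat \<Rightarrow> 'a set" where
  "facetX lam eta m lam0 xi i = (if i = 0 then Hcut_o lam eta m lam0 xi else facetH lam eta m i)"

definition faceF :: "(nat \<Rightarrow> 'a::euclidean_space) \<Rightarrow> (nat \<Rightarrow> real) \<Rightarrow> nat \<Rightarrow> 'a \<Rightarrow> real \<Rightarrow> nat set \<Rightarrow> 'a set" where
  "faceF lam eta m lam0 xi \<sigma> = polyP lam eta m \<inter> (\<Inter>i\<in>\<sigma>. facetX lam eta m lam0 xi i)"

definition K_Delta :: "(nat \<Rightarrow> 'a::euclidean_space) \<Rightarrow> (nat \<Rightarrow> real) \<Rightarrow> nat \<Rightarrow> nat set set" where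
  "K_Delta lam eta m = {\<sigma>. \<sigma> \<subseteq> {1..m} \<and> (\<Inter>i\<in>\<sigma>. facetH lam eta m i) \<noteq> {}} \<union> {{}}"

definition K_plus :: "(nat \<Rightarrow> 'a::euclidean_space) \<Rightarrow> (nat \<Rightarrow> real) \<Rightarrow> nat \<Rightarrow> 'a \<Rightarrow> real \<Rightarrow> nat set set" where
  "K_plus lam eta m lam0 xi =
     {\<sigma>. \<sigma> \<subseteq> {0..m} \<and>
        (\<Inter>i\<in>\<sigma>. facetX lam eta m lam0 xi i \<inter> Delta_plus lam eta m lam0 xi) \<noteq> {}} \<union> {{}}"

text \<open>Smallest simplicial complex containing Z: its downward closure.\<close>
definition scx_closure :: "'b set set \<Rightarrow> 'b set set" where
  "scx_closure Z = {\<tau>. \<exists>\<sigma>\<in>Z. \<tau> \<subseteq> \<sigma>}"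

definition star_O :: "'b set set \<Rightarrow> 'b \<Rightarrow> 'b set set" where
  "star_O K v = {\<sigma>\<in>K. v \<in> \<sigma>}"

end

theory Submission
  imports Defs
begin

lemma faceF_nat:
  assumes "\<sigma> \<subseteq> {1..m}"
  shows "faceF lam eta m lam0 xi \<sigma> = polyP lam eta m \<inter> (\<Inter>i\<in>\<sigma>. hyp (lam i) (eta i))"
proof -
  have "\<And>i. i \<in> \<sigma> \<Longrightarrow> facetX lam eta m lam0 xi i = polyP lam eta m \<inter> hyp (lam i) (eta i)"
    using assms by (force simp: facetX_def facetH_def)
  hence "(\<Inter>i\<in>\<sigma>. facetX lam eta m lam0 xi i) = (\<Inter>i\<in>\<sigma>. polyP lam eta m \<inter> hyp (lam i) (eta i))"
    by simp
  thus ?thesis unfolding faceF_def by auto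
qed

lemma hyp_eq: "hyp l e = {x. inner l x = - e}"
  by (auto simp: hyp_def inner_commute algebra_simps)

lemma lin_comb: "inner ((1 - u) *\<^sub>R a + u *\<^sub>R b) l + e = (1 - u) * (inner a l + e) + u * (inner b l + e)"
  by (simp add: inner_add_left algebra_simps)

lemma key:
  fixes lam :: "nat \<Rightarrow> 'a::euclidean_space"
  assumes gp: "general_position_cut lam eta m lam0 xi"
    and pt: "polytope (polyP lam eta m)"
    and sig: "\<sigma> \<subseteq> {1..m}"
    and x0: "x0 \<in> polyP lam eta m" "\<forall>i\<in>\<sigma>. inner x0 (lam i) + eta i = 0" "inner x0 lam0 + xi \<ge> 0"
  shows "\<exists>\<tau>. \<sigma> \<subseteq> \<tau> \<and> \<tau> \<subseteq> {1..m} \<and> faceF lam eta m lam0 xi \<tau> \<noteq> {} \<and>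
           faceF lam eta m lam0 xi \<tau> \<subseteq> Delta_plus lam eta m lam0 xi - Hcut_o lam eta m lam0 xi"
proof -
  define P where "P = polyP lam eta m"
  have cP: "compact P" "convex P" using pt polytope_imp_compact polytope_imp_convex P_def by auto
  define F where "F = P \<inter> (\<Inter>i\<in>\<sigma>. hyp (lam i) (eta i))"
  have clh: "\<And>i. closed (hyp (lam i) (eta i))" by (simp add: hyp_eq closed_hyperplane)
  have cvh: "\<And>i. convex (hyp (lam i) (eta i))" by (simp add: hyp_eq convex_hyperplane)
  have cF: "compact F" unfolding F_def
    by (intro compact_Int_closed cP closed_INT ballI clh)
  have vF: "convex F" unfolding F_def
    by (intro convex_Int cP convex_INT cvh)
  have x0F: "x0 \<in> F" using x0 by (auto simp: F_def P_def hyp_def)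
  obtain xm where xm: "xm \<in> F" "\<And>y. y \<in> F \<Longrightarrow> inner y lam0 \<le> inner xm lam0"
    using continuous_attains_sup[OF cF _ continuous_on_inner[OF continuous_on_id continuous_on_const], of lam0]
      x0F by auto
  define c where "c = inner xm lam0"
  define M where "M = F \<inter> {x. inner lam0 x = c}"
  have cM: "compact M" unfolding M_def by (intro compact_Int_closed cF closed_hyperplane)
  have vM: "convex M" unfolding M_def by (intro convex_Int vF convex_hyperplane)
  have nM: "M \<noteq> {}" using xm by (auto simp: M_def c_def inner_commute)
  obtain v where vM': "v extreme_point_of M" using extreme_point_exists_convex[OF cM vM nM] by blast
  have vinM: "v \<in> M" using vM' extreme_point_of_def by blast
  have vP: "v \<in> P" and vc: "inner v lam0 = c" and vsig: "\<forall>i\<in>\<sigma>. inner v (lam i) + eta i = 0"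
    using vinM by (auto simp: M_def F_def hyp_def inner_commute)
  have Pcons: "\<And>x i. x \<in> P \<Longrightarrow> i \<in> {1..m} \<Longrightarrow> inner x (lam i) + eta i \<ge> 0"
    by (auto simp: P_def polyP_def)
  have vext: "v extreme_point_of P"
    unfolding extreme_point_of_def
  proof (intro conjI vP ballI notI)
    fix a b assume a: "a \<in> P" and b: "b \<in> P" and seg: "v \<in> open_segment a b"
    then obtain u where u: "0 < u" "u < 1" "v = (1 - u) *\<^sub>R a + u *\<^sub>R b"
      by (auto simp: in_segment)
    have zero: "\<And>p q. p \<ge> 0 \<Longrightarrow> q \<ge> 0 \<Longrightarrow> (1 - u) * p + u * q = 0 \<Longrightarrow> p = 0 \<and> q = 0"
    proof -
      fix p q :: real assume "p \<ge> 0" "q \<ge> 0" "(1 - u) * p + u * q = 0"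
      moreover have "(1 - u) * p \<ge> 0" "u * q \<ge> 0" using u \<open>p \<ge> 0\<close> \<open>q \<ge> 0\<close> by auto
      ultimately have "(1 - u) * p = 0" "u * q = 0" by linarith+
      thus "p = 0 \<and> q = 0" using u by auto
    qed
    have "\<forall>i\<in>\<sigma>. inner a (lam i) + eta i = 0 \<and> inner b (lam i) + eta i = 0"
    proof
      fix i assume i: "i \<in> \<sigma>"
      have "(1 - u) * (inner a (lam i) + eta i) + u * (inner b (lam i) + eta i) = 0"
        using vsig i u(3) lin_comb[of u a b "lam i" "eta i"] by simp
      thus "inner a (lam i) + eta i = 0 \<and> inner b (lam i) + eta i = 0"
        using zero Pcons a b i sig by blast
    qed
    hence aF: "a \<in> F" and bF: "b \<in> F" using a b by (auto simp: F_def hyp_def)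
    have "(1 - u) * (c - inner a lam0) + u * (c - inner b lam0) = 0"
    proof -
      have "(1 - u) * (inner a lam0 - c) + u * (inner b lam0 - c) = 0"
        using vc u(3) lin_comb[of u a b lam0 "- c"] by simp
      thus ?thesis by (simp add: algebra_simps)
    qed
    hence "c - inner a lam0 = 0 \<and> c - inner b lam0 = 0"
      using zero[of "c - inner a lam0" "c - inner b lam0"] xm(2)[OF aF] xm(2)[OF bF] c_def by simp
    hence "a \<in> M" "b \<in> M" using aF bF by (auto simp: M_def inner_commute)
    thus False using vM' seg extreme_point_of_def by blast
  qed
  define \<tau> where "\<tau> = {i\<in>{1..m}. inner v (lam i) + eta i = 0}"
  have st: "\<sigma> \<subseteq> \<tau>" using sig vsig by (auto simp: \<tau>_def)
  define A where "A = (\<Inter>i\<in>\<tau>. hyp (lam i) (eta i))"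
  have vA: "v \<in> A" by (auto simp: A_def \<tau>_def hyp_def)
  have Av: "A = {v}"
  proof (rule ccontr)
    assume "A \<noteq> {v}"
    then obtain w where wA: "w \<in> A" and wv: "w \<noteq> v" using vA by blast
    define U where "U = (\<Inter>i\<in>{1..m}-\<tau>. {x. inner (lam i) x > - eta i})"
    have oU: "open U" unfolding U_def by (intro open_INT finite_Diff finite_atLeastAtMost ballI open_halfspace_gt)
    have vU: "v \<in> U" unfolding U_def
    proof (rule INT_I)
      fix i assume i: "i \<in> {1..m} - \<tau>"
      hence "inner v (lam i) + eta i \<noteq> 0" "inner v (lam i) + eta i \<ge> 0"
        using Pcons[OF vP] by (auto simp: \<tau>_def)
      thus "v \<in> {x. inner (lam i) x > - eta i}" by (simp add: inner_commute)
    qed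
    obtain e where e: "e > 0" "ball v e \<subseteq> U" using oU vU open_contains_ball by blast
    define t where "t = e / (2 * norm (w - v))"
    have nz: "norm (w - v) > 0" using wv by simp
    have t0: "t > 0" using e nz by (simp add: t_def)
    have tn: "t * norm (w - v) = e / 2" using nz by (simp add: t_def)
    define a where "a = v + t *\<^sub>R (w - v)"
    define b where "b = v - t *\<^sub>R (w - v)"
    have inP: "y \<in> P" if y: "y = v + s *\<^sub>R (w - v)" and s: "\<bar>s\<bar> = t" for y s
    proof -
      have "dist v y = e / 2" using y s tn by (simp add: dist_norm)
      hence "y \<in> U" using e by auto
      have "inner y (lam i) + eta i \<ge> 0" if i: "i \<in> {1..m}" for i
      proof (cases "i \<in> \<tau>")
        case True
        have "inner v (lam i) + eta i = 0" "inner w (lam i) + eta i = 0"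
          using True wA by (auto simp: \<tau>_def A_def hyp_def)
        moreover have "inner y (lam i) + eta i = (1 - s) * (inner v (lam i) + eta i) + s * (inner w (lam i) + eta i)"
          unfolding y by (simp add: inner_add_left inner_diff_left algebra_simps)
        ultimately show ?thesis by simp
      next
        case False
        hence "inner (lam i) y > - eta i" using \<open>y \<in> U\<close> i unfolding U_def by blast
        thus ?thesis by (simp add: inner_commute)
      qed
      thus ?thesis by (auto simp: P_def polyP_def)
    qed
    have aP: "a \<in> P" using inP[of a t] t0 unfolding a_def by simp
    have "b = v + (- t) *\<^sub>R (w - v)" unfolding b_def by simp
    moreover have "\<bar>- t\<bar> = t" using t0 by simp
    ultimately have bP: "b \<in> P" by (rule inP)
    have "a - b = t *\<^sub>R (w - v) + t *\<^sub>R (w - v)" by (simp add: a_def b_def)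
    moreover have "t *\<^sub>R (w - v) + t *\<^sub>R (w - v) \<noteq> 0"
      using t0 wv by (simp add: scaleR_2[symmetric])
    ultimately have ab: "a \<noteq> b" by auto
    have "midpoint a b = (1/2) *\<^sub>R v + (1/2) *\<^sub>R v" by (simp add: a_def b_def midpoint_def algebra_simps)
    also have "\<dots> = v" by (simp flip: scaleR_add_left)
    finally have "v = midpoint a b" by simp
    hence "v \<in> open_segment a b" using ab by simp
    thus False using vext aP bP extreme_point_of_def by blast
  qed
  have fv: "inner v lam0 + xi \<noteq> 0"
  proof
    assume h: "inner v lam0 + xi = 0"
    have ts: "\<tau> \<subseteq> {1..m}" by (auto simp: \<tau>_def)
    have "A \<inter> hyp lam0 xi = {v}" using Av h by (auto simp: hyp_def)
    hence ne: "A \<inter> hyp lam0 xi \<noteq> {}" by simp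
    have "aff_dim (A \<inter> hyp lam0 xi) = aff_dim A - 1"
      using gp ts ne unfolding general_position_cut_def A_def by blast
    thus False using Av \<open>A \<inter> hyp lam0 xi = {v}\<close> by simp
  qed
  have "c \<ge> inner x0 lam0" using xm(2)[OF x0F] c_def by simp
  hence fpos: "inner v lam0 + xi > 0" using fv vc x0(3) by linarith
  have ts: "\<tau> \<subseteq> {1..m}" by (auto simp: \<tau>_def)
  have FT: "faceF lam eta m lam0 xi \<tau> = {v}"
  proof -
    have "faceF lam eta m lam0 xi \<tau> = P \<inter> A" using faceF_nat[OF ts] by (simp add: A_def P_def)
    thus ?thesis using Av vP by auto
  qed
  show ?thesis
    apply (rule exI[of _ \<tau>])
    using st ts FT vP fpos
    by (auto simp: Delta_plus_def Hcut_o_def hyp_def P_def)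
qed

lemma faceF_anti: "\<sigma> \<subseteq> \<tau> \<Longrightarrow> faceF lam eta m lam0 xi \<tau> \<subseteq> faceF lam eta m lam0 xi \<sigma>"
  by (auto simp: faceF_def)

lemma faceF_0: "0 \<in> \<sigma> \<Longrightarrow> faceF lam eta m lam0 xi \<sigma> \<subseteq> Hcut_o lam eta m lam0 xi"
  by (auto simp: faceF_def facetX_def)

theorem lemma3p11:
  fixes lam :: "nat \<Rightarrow> 'a::euclidean_space" and eta :: "nat \<Rightarrow> real"
    and m :: nat and lam0 :: 'a and xi :: real
  assumes "generic_cut lam eta m lam0 xi"
  defines "Z \<equiv> {\<sigma>. \<sigma> \<subseteq> {0..m} \<and> faceF lam eta m lam0 xi \<sigma> \<noteq> {} \<and>
                 faceF lam eta m lam0 xi \<sigma> \<subseteq> Delta_plus lam eta m lam0 xi - Hcut_o lam eta m lam0 xi}"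
  shows "K_plus lam eta m lam0 xi - scx_closure Z = star_O (K_plus lam eta m lam0 xi) 0 \<and>
         K_Delta lam eta m - scx_closure Z =
           {\<sigma>. \<sigma> \<subseteq> {0..m} \<and> faceF lam eta m lam0 xi \<sigma> \<noteq> {} \<and>
                faceF lam eta m lam0 xi \<sigma> \<subseteq> Delta_minus lam eta m lam0 xi - Hcut_o lam eta m lam0 xi}"
proof -
  have gp: "general_position_cut lam eta m lam0 xi" and pt: "polytope (polyP lam eta m)"
    and hn: "Hcut_o lam eta m lam0 xi \<noteq> {}"
    using assms(1) by (auto simp: generic_cut_def simple_polytope_def)
  obtain h where h: "h \<in> polyP lam eta m" "inner h lam0 + xi = 0"
    using hn by (auto simp: Hcut_o_def hyp_def)
  have KEY: "\<sigma> \<in> scx_closure Z" if hyps: "\<sigma> \<subseteq> {1..m}" "x0 \<in> polyP lam eta m"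
    "\<forall>i\<in>\<sigma>. inner x0 (lam i) + eta i = 0" "inner x0 lam0 + xi \<ge> 0" for \<sigma> x0
  proof -
    obtain \<tau> where "\<sigma> \<subseteq> \<tau>" "\<tau> \<subseteq> {1..m}" "faceF lam eta m lam0 xi \<tau> \<noteq> {}"
      "faceF lam eta m lam0 xi \<tau> \<subseteq> Delta_plus lam eta m lam0 xi - Hcut_o lam eta m lam0 xi"
      using key[OF gp pt hyps] by blast
    moreover have "\<tau> \<subseteq> {0..m}" using \<open>\<tau> \<subseteq> {1..m}\<close> by auto
    ultimately show ?thesis unfolding scx_closure_def Z_def by blast
  qed
  have empty_cl: "{} \<in> scx_closure Z" using KEY[of "{}" h] h by simp
  have inter_nat: "(\<Inter>i\<in>\<sigma>. facetH lam eta m i) = polyP lam eta m \<inter> (\<Inter>i\<in>\<sigma>. hyp (lam i) (eta i))"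
    if "\<sigma> \<noteq> {}" for \<sigma>
    using that by (auto simp: facetH_def)
  have P1: "K_plus lam eta m lam0 xi - scx_closure Z = star_O (K_plus lam eta m lam0 xi) 0"
  proof (rule set_eqI, rule iffI)
    fix \<sigma> assume a: "\<sigma> \<in> K_plus lam eta m lam0 xi - scx_closure Z"
    have "0 \<in> \<sigma>"
    proof (rule ccontr)
      assume n0: "0 \<notin> \<sigma>"
      have ne: "\<sigma> \<noteq> {}" using a empty_cl by auto
      hence s0: "\<sigma> \<subseteq> {0..m}" and
        ex: "(\<Inter>i\<in>\<sigma>. facetX lam eta m lam0 xi i \<inter> Delta_plus lam eta m lam0 xi) \<noteq> {}"
        using a by (auto simp: K_plus_def)
      have s1: "\<sigma> \<subseteq> {1..m}" proof
      fix i assume "i \<in> \<sigma>" thus "i \<in> {1..m}" using s0 n0 by (cases i) auto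
    qed
      obtain x where x: "x \<in> (\<Inter>i\<in>\<sigma>. facetX lam eta m lam0 xi i \<inter> Delta_plus lam eta m lam0 xi)"
        using ex by blast
      obtain i0 where i0: "i0 \<in> \<sigma>" using ne by blast
      have xP: "x \<in> polyP lam eta m" "inner x lam0 + xi \<ge> 0"
      proof -
        have "x \<in> Delta_plus lam eta m lam0 xi" using x i0 by blast
        thus "x \<in> polyP lam eta m" "inner x lam0 + xi \<ge> 0" by (auto simp: Delta_plus_def)
      qed
      have "\<forall>i\<in>\<sigma>. inner x (lam i) + eta i = 0"
      proof
        fix i assume i: "i \<in> \<sigma>"
        have "x \<in> facetX lam eta m lam0 xi i" using x i by blast
        moreover have "i \<noteq> 0" using n0 i by metis
        ultimately
        show "inner x (lam i) + eta i = 0" by (auto simp: facetX_def facetH_def hyp_def)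
      qed
      hence "\<sigma> \<in> scx_closure Z" using KEY[OF s1 xP(1) _ xP(2)] by blast
      thus False using a by blast
    qed
    thus "\<sigma> \<in> star_O (K_plus lam eta m lam0 xi) 0" using a by (simp add: star_O_def)
  next
    fix \<sigma> assume a: "\<sigma> \<in> star_O (K_plus lam eta m lam0 xi) 0"
    have "\<sigma> \<notin> scx_closure Z"
    proof
      assume "\<sigma> \<in> scx_closure Z"
      then obtain \<tau> where t: "\<tau> \<in> Z" "\<sigma> \<subseteq> \<tau>" by (auto simp: scx_closure_def)
      have "0 \<in> \<tau>" using a t by (auto simp: star_O_def)
      hence "faceF lam eta m lam0 xi \<tau> \<subseteq> Hcut_o lam eta m lam0 xi" by (rule faceF_0)
      thus False using t(1) by (auto simp: Z_def)
    qed
    thus "\<sigma> \<in> K_plus lam eta m lam0 xi - scx_closure Z" using a by (simp add: star_O_def)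
  qed
  have P2: "K_Delta lam eta m - scx_closure Z =
           {\<sigma>. \<sigma> \<subseteq> {0..m} \<and> faceF lam eta m lam0 xi \<sigma> \<noteq> {} \<and>
                faceF lam eta m lam0 xi \<sigma> \<subseteq> Delta_minus lam eta m lam0 xi - Hcut_o lam eta m lam0 xi}"
  proof (rule set_eqI, rule iffI)
    fix \<sigma> assume a: "\<sigma> \<in> K_Delta lam eta m - scx_closure Z"
    have ne: "\<sigma> \<noteq> {}" using a empty_cl by auto
    hence s1: "\<sigma> \<subseteq> {1..m}" and ex: "(\<Inter>i\<in>\<sigma>. facetH lam eta m i) \<noteq> {}"
      using a by (auto simp: K_Delta_def)
    have FF: "faceF lam eta m lam0 xi \<sigma> = (\<Inter>i\<in>\<sigma>. facetH lam eta m i)"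
      using faceF_nat[OF s1] inter_nat[OF ne] by simp
    have sub: "faceF lam eta m lam0 xi \<sigma> \<subseteq> Delta_minus lam eta m lam0 xi - Hcut_o lam eta m lam0 xi"
    proof
      fix x assume x: "x \<in> faceF lam eta m lam0 xi \<sigma>"
      have x2: "x \<in> polyP lam eta m \<inter> (\<Inter>i\<in>\<sigma>. hyp (lam i) (eta i))"
        using x by (simp add: faceF_nat[OF s1])
      hence xP: "x \<in> polyP lam eta m" and xs: "\<forall>i\<in>\<sigma>. inner x (lam i) + eta i = 0"
        by (auto simp: hyp_def)
      have "\<not> inner x lam0 + xi \<ge> 0"
        using KEY[OF s1 xP xs] a by blast
      thus "x \<in> Delta_minus lam eta m lam0 xi - Hcut_o lam eta m lam0 xi"
        using xP by (auto simp: Delta_minus_def Hcut_o_def hyp_def)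
    qed
    show "\<sigma> \<in> {\<sigma>. \<sigma> \<subseteq> {0..m} \<and> faceF lam eta m lam0 xi \<sigma> \<noteq> {} \<and>
                faceF lam eta m lam0 xi \<sigma> \<subseteq> Delta_minus lam eta m lam0 xi - Hcut_o lam eta m lam0 xi}"
      using s1 ex FF sub by auto
  next
    fix \<sigma> assume "\<sigma> \<in> {\<sigma>. \<sigma> \<subseteq> {0..m} \<and> faceF lam eta m lam0 xi \<sigma> \<noteq> {} \<and>
                faceF lam eta m lam0 xi \<sigma> \<subseteq> Delta_minus lam eta m lam0 xi - Hcut_o lam eta m lam0 xi}"
    hence s0: "\<sigma> \<subseteq> {0..m}" and fne: "faceF lam eta m lam0 xi \<sigma> \<noteq> {}"
      and fsub: "faceF lam eta m lam0 xi \<sigma> \<subseteq> Delta_minus lam eta m lam0 xi - Hcut_o lam eta m lam0 xi"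
      by auto
    have n0: "0 \<notin> \<sigma>"
    proof
      assume "0 \<in> \<sigma>"
      hence "faceF lam eta m lam0 xi \<sigma> \<subseteq> Hcut_o lam eta m lam0 xi" by (rule faceF_0)
      thus False using fne fsub by blast
    qed
    have s1: "\<sigma> \<subseteq> {1..m}" proof
      fix i assume "i \<in> \<sigma>" thus "i \<in> {1..m}" using s0 n0 by (cases i) auto
    qed
    have ne: "\<sigma> \<noteq> {}"
    proof
      assume "\<sigma> = {}"
      hence "h \<in> faceF lam eta m lam0 xi \<sigma>" using h by (simp add: faceF_def)
      thus False using fsub h by (auto simp: Hcut_o_def hyp_def)
    qed
    have FF: "faceF lam eta m lam0 xi \<sigma> = (\<Inter>i\<in>\<sigma>. facetH lam eta m i)"
      using faceF_nat[OF s1] inter_nat[OF ne] by simp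
    have K: "\<sigma> \<in> K_Delta lam eta m" using s1 FF fne by (auto simp: K_Delta_def)
    have "\<sigma> \<notin> scx_closure Z"
    proof
      assume "\<sigma> \<in> scx_closure Z"
      then obtain \<tau> where t: "\<tau> \<in> Z" "\<sigma> \<subseteq> \<tau>" by (auto simp: scx_closure_def)
      then obtain y where y: "y \<in> faceF lam eta m lam0 xi \<tau>" by (auto simp: Z_def)
      have y2: "y \<in> Delta_plus lam eta m lam0 xi - Hcut_o lam eta m lam0 xi" using y t(1) by (auto simp: Z_def)
      have "y \<in> faceF lam eta m lam0 xi \<sigma>" using faceF_anti[OF t(2)] y by blast
      hence "y \<in> Delta_minus lam eta m lam0 xi" using fsub by blast
      thus False using y2 by (auto simp: Delta_plus_def Delta_minus_def Hcut_o_def hyp_def)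
    qed
    thus "\<sigma> \<in> K_Delta lam eta m - scx_closure Z" using K by blast
  qed
  show ?thesis using P1 P2 by blast
qed

end
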